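(* Let $\Sigma \in \mathbb{R}^{3\times 3}$ be a symmetric positive definite matrix and let $\mathbf{c}_1,\dots,\mathbf{c}_\kappa \in \mathbb{R}^3$. For $k=1,\dots,\kappa$ define $\phi_k:\mathbb{R}^3\to\mathbb{R}$ by $\phi_k(\mathbf{x}) = \exp\!\big(-(\mathbf{x}-\mathbf{c}_k)^\top \Sigma^{-1}(\mathbf{x}-\mathbf{c}_k)\big)$, and let $\Phi:\mathbb{R}^3\to\mathbb{R}^\kappa$, $\Phi(\mathbf{x}) = [\phi_1(\mathbf{x}),\dots,\phi_\kappa(\mathbf{x})]^\top$. If the points $\mathbf{c}_1,\dots,\mathbf{c}_\kappa$ do not all lie in a common (affine) hyperplane of $\mathbb{R}^3$, then $\Phi$ is injective.
   Context: A hyperplane of $\mathbb{R}^3$ means a set of the form $\{\mathbf{c}\in\mathbb{R}^3 : \mathbf{b}^\top \mathbf{c} = a\}$ with $\mathbf{b}\in\mathbb{R}^3\setminus\{0\}$, $a\in\mathbb{R}$. *)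

theory Defs
  imports "HOL-Analysis.Analysis"
begin

definition sym_pos_def_mat :: "real^3^3 \<Rightarrow> bool" where
  "sym_pos_def_mat S \<longleftrightarrow> transpose S = S \<and> (\<forall>x::real^3. x \<noteq> 0 \<longrightarrow> x \<bullet> (S *v x) > 0)"

definition hyperplane3 :: "(real^3) set \<Rightarrow> bool" where
  "hyperplane3 H \<longleftrightarrow> (\<exists>b a. b \<noteq> 0 \<and> H = {c. b \<bullet> c = a})"

definition gauss_rbf :: "real^3^3 \<Rightarrow> real^3 \<Rightarrow> real^3 \<Rightarrow> real" where
  "gauss_rbf S c x = exp (- ((x - c) \<bullet> (matrix_inv S *v (x - c))))"

definition Phi :: "real^3^3 \<Rightarrow> (nat \<Rightarrow> real^3) \<Rightarrow> nat \<Rightarrow> real^3 \<Rightarrow> (nat \<Rightarrow> real)" where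
  "Phi S c \<kappa> x = (\<lambda>k. if k \<in> {1..\<kappa>} then gauss_rbf S (c k) x else 0)"

end

theory Submission
  imports Defs
begin

lemma symm_swap:
  fixes M :: "real^3^3"
  assumes "transpose M = M"
  shows "u \<bullet> (M *v w) = w \<bullet> (M *v u)"
proof -
  have "u \<bullet> (M *v w) = (u v* M) \<bullet> w" by (simp add: dot_lmul_matrix)
  also have "u v* M = transpose M *v u" by (metis transpose_transpose vector_transpose_matrix)
  finally show ?thesis using assms by (simp add: inner_commute)
qed

lemma quad_expand:
  fixes M :: "real^3^3"
  assumes "transpose M = M"
  shows "(x - c) \<bullet> (M *v (x - c)) = x \<bullet> (M *v x) - 2 * (c \<bullet> (M *v x)) + c \<bullet> (M *v c)"
proof -
  have "(x - c) \<bullet> (M *v (x - c)) = x \<bullet> (M *v x) - x \<bullet> (M *v c) - c \<bullet> (M *v x) + c \<bullet> (M *v c)"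
    by (simp add: matrix_vector_mult_diff_distrib inner_diff_left inner_diff_right)
  moreover have "x \<bullet> (M *v c) = c \<bullet> (M *v x)" using symm_swap[OF assms] .
  ultimately show ?thesis by simp
qed

theorem mainTheorem1:
  fixes S :: "real^3^3" and c :: "nat \<Rightarrow> real^3" and \<kappa> :: nat
  assumes "sym_pos_def_mat S"
    and "\<not> (\<exists>H. hyperplane3 H \<and> (\<forall>k\<in>{1..\<kappa>}. c k \<in> H))"
  shows "inj (Phi S c \<kappa>)"
proof (rule injI)
  fix x y assume eq: "Phi S c \<kappa> x = Phi S c \<kappa> y"
  define M where "M = matrix_inv S"
  have St: "transpose S = S" and pd: "\<And>v. v \<noteq> 0 \<Longrightarrow> v \<bullet> (S *v v) > 0"
    using assms(1) unfolding sym_pos_def_mat_def by auto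
  have ker: "\<forall>v. S *v v = 0 \<longrightarrow> v = 0"
    using pd by (metis inner_zero_right less_irrefl)
  have inv: "invertible S"
    using ker matrix_left_invertible_ker invertible_left_inverse by blast
  have MS: "M ** S = mat 1" and SM: "S ** M = mat 1"
    using someI_ex[OF inv[unfolded invertible_def]] by (auto simp: M_def matrix_inv_def)
  have "transpose M ** S = mat 1"
    using SM St by (metis matrix_transpose_mul transpose_mat)
  hence "transpose M = M"
    by (metis MS SM matrix_mul_assoc matrix_mul_lid matrix_mul_rid)
  note Mt = this
  have Minj: "v = 0" if "M *v v = 0" for v
  proof -
    have "S *v (M *v v) = v" by (simp add: matrix_vector_mul_assoc SM)
    thus ?thesis using that by simp
  qed
  define a where "a = x \<bullet> (M *v x) - y \<bullet> (M *v y)"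
  define b where "b = 2 *\<^sub>R (M *v (x - y))"
  have onH: "b \<bullet> c k = a" if k: "k \<in> {1..\<kappa>}" for k
  proof -
    have "gauss_rbf S (c k) x = gauss_rbf S (c k) y"
      using fun_cong[OF eq, of k] k by (simp add: Phi_def)
    hence "(x - c k) \<bullet> (M *v (x - c k)) = (y - c k) \<bullet> (M *v (y - c k))"
      by (simp add: gauss_rbf_def M_def)
    hence "x \<bullet> (M *v x) - 2 * (c k \<bullet> (M *v x)) = y \<bullet> (M *v y) - 2 * (c k \<bullet> (M *v y))"
      by (simp add: quad_expand[OF Mt])
    thus ?thesis
      by (simp add: a_def b_def matrix_vector_mult_diff_distrib inner_diff_right inner_commute)
  qed
  show "x = y"
  proof (rule ccontr)
    assume "x \<noteq> y"
    hence "M *v (x - y) \<noteq> 0" using Minj by force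
    hence "b \<noteq> 0" by (simp add: b_def)
    hence "hyperplane3 {v. b \<bullet> v = a}" unfolding hyperplane3_def by blast
    thus False using assms(2) onH by blast
  qed
qed

end
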